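(* Let $u=u'u''$ be the product of two 5-complex numbers, and denote the parameters of $u'$, $u''$ by primes and double primes respectively. Then $v_+=v_+'v_+''$; $\rho_k=\rho_k'\rho_k''$ and $\phi_k=\phi_k'+\phi_k''$ (modulo $2\pi$) for $k=1,2$; $v_k=v_k'v_k''-\tilde v_k'\tilde v_k''$ and $\tilde v_k=v_k'\tilde v_k''+\tilde v_k'v_k''$ for $k=1,2$; $\tan\theta_+=\frac{1}{\sqrt2}\tan\theta_+'\tan\theta_+''$; $\tan\psi_1=\tan\psi_1'\tan\psi_1''$; and $\rho=\rho'\rho''$.
   Context: A 5-complex number is $u=x_0+h_1x_1+h_2x_2+h_3x_3+h_4x_4$ with real $x_j$, with componentwise addition and the commutative associative bilinear multiplication determined by $h_jh_k=h_{(j+k)\bmod 5}$, $h_0=1$. Its canonical variables are $v_+=\sum_{j=0}^4 x_j$, and for $k=1,2$: $v_k=\sum_{j=0}^4 x_j\cos(2\pi kj/5)$, $\tilde v_k=\sum_{j=0}^4x_j\sin(2\pi kj/5)$. For $k=1,2$ define $\rho_k\ge 0$ and $\phi_k\in[0,2\pi)$ by $\rho_k^2=v_k^2+\tilde v_k^2$, $\cos\phi_k=v_k/\rho_k$, $\sin\phi_k=\tilde v_k/\rho_k$. The planar angle $\psi_1\in[0,\pi/2]$ is given by $\tan\psi_1=\rho_1/\rho_2$, the polar angle $\theta_+\in[0,\pi]$ by $\tan\theta_+=\sqrt2\rho_1/v_+$, and the amplitude by $\rho=(v_+\rho_1^2\rho_2^2)^{1/5}$ (real fifth root). *)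

theory Defs
  imports "HOL-Analysis.Analysis"
begin

text \<open>A 5-complex number x0 + h1 x1 + ... + h4 x4 is represented by its component
  function x :: nat => real; only the components x 0, ..., x 4 are relevant.\<close>

definition mult5 :: "(nat \<Rightarrow> real) \<Rightarrow> (nat \<Rightarrow> real) \<Rightarrow> (nat \<Rightarrow> real)" where
  "mult5 x y = (\<lambda>m. \<Sum>j<5. \<Sum>k<5. if (j + k) mod 5 = m then x j * y k else 0)"

definition vplus :: "(nat \<Rightarrow> real) \<Rightarrow> real" where
  "vplus x = (\<Sum>j<5. x j)"

definition vk :: "nat \<Rightarrow> (nat \<Rightarrow> real) \<Rightarrow> real" where
  "vk k x = (\<Sum>j<5. x j * cos (2 * pi * real k * real j / 5))"

definition vtk :: "nat \<Rightarrow> (nat \<Rightarrow> real) \<Rightarrow> real" where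
  "vtk k x = (\<Sum>j<5. x j * sin (2 * pi * real k * real j / 5))"

definition rhok :: "nat \<Rightarrow> (nat \<Rightarrow> real) \<Rightarrow> real" where
  "rhok k x = sqrt ((vk k x)\<^sup>2 + (vtk k x)\<^sup>2)"

text \<open>Azimuthal angle phi_k in [0, 2pi), meaningful when rho_k > 0.\<close>
definition phik :: "nat \<Rightarrow> (nat \<Rightarrow> real) \<Rightarrow> real" where
  "phik k x = (SOME \<phi>. 0 \<le> \<phi> \<and> \<phi> < 2 * pi \<and>
      cos \<phi> = vk k x / rhok k x \<and> sin \<phi> = vtk k x / rhok k x)"

definition psi1 :: "(nat \<Rightarrow> real) \<Rightarrow> real" where
  "psi1 x = (if rhok 2 x > 0 then arctan (rhok 1 x / rhok 2 x) else pi / 2)"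

definition thetaplus :: "(nat \<Rightarrow> real) \<Rightarrow> real" where
  "thetaplus x = (if vplus x > 0 then arctan (sqrt 2 * rhok 1 x / vplus x)
                  else if vplus x < 0 then pi + arctan (sqrt 2 * rhok 1 x / vplus x)
                  else pi / 2)"

definition amp :: "(nat \<Rightarrow> real) \<Rightarrow> real" where
  "amp x = root 5 (vplus x * (rhok 1 x)\<^sup>2 * (rhok 2 x)\<^sup>2)"

end

theory Submission
  imports Defs
begin

definition cc :: "nat \<Rightarrow> (nat \<Rightarrow> real) \<Rightarrow> complex" where
  "cc k x = (\<Sum>j<5. complex_of_real (x j) * cis (2 * pi * real k * real j / 5))"

lemma cis_mod5: "cis (2 * pi * real k * real ((j + l) mod 5) / 5) =
   cis (2 * pi * real k * real j / 5) * cis (2 * pi * real k * real l / 5)"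
proof -
  define q where "q = (j + l) div 5"
  define r where "r = (j + l) mod 5"
  have n: "j + l = 5 * q + r" unfolding q_def r_def by simp
  have "real (j + l) = real (5 * q + r)" using n by (rule arg_cong)
  then have jj: "real j = 5 * real q + real r - real l" by simp
  have "cis (2 * pi * real k * real j / 5) * cis (2 * pi * real k * real l / 5)
      = cis (2 * pi * real k * real j / 5 + 2 * pi * real k * real l / 5)"
    by (rule cis_mult)
  also have "2 * pi * real k * real j / 5 + 2 * pi * real k * real l / 5
      = 2 * pi * real k * real r / 5 + 2 * pi * real (k * q)"
    unfolding jj by (simp add: field_simps)
  also have "cis (2 * pi * real k * real r / 5 + 2 * pi * real (k * q))
      = cis (2 * pi * real k * real r / 5) * cis (2 * pi * real (k * q))"
    by (rule cis_mult[symmetric])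
  also have "cis (2 * pi * real (k * q)) = 1"
    by (rule cis_multiple_2pi) (metis Ints_of_nat)
  finally show ?thesis unfolding r_def by simp
qed

lemma cc_mult: "cc k (mult5 x y) = cc k x * cc k y"
proof -
  have "cc k (mult5 x y) = (\<Sum>m<5. \<Sum>j<5. \<Sum>l<5.
        (if (j + l) mod 5 = m then complex_of_real (x j * y l) * cis (2 * pi * real k * real m / 5) else 0))"
    unfolding cc_def mult5_def
  proof (rule sum.cong[OF refl])
    fix m
    have "complex_of_real (\<Sum>j<5. \<Sum>l<5. if (j + l) mod 5 = m then x j * y l else 0) * cis (2 * pi * real k * real m / 5)
      = (\<Sum>j<5. \<Sum>l<5. complex_of_real (if (j + l) mod 5 = m then x j * y l else 0) * cis (2 * pi * real k * real m / 5))"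
      by (simp only: of_real_sum sum_distrib_right)
    also have "\<dots> = (\<Sum>j<5. \<Sum>l<5. (if (j + l) mod 5 = m then complex_of_real (x j * y l) * cis (2 * pi * real k * real m / 5) else 0))"
      by (intro sum.cong refl) simp
    finally show "complex_of_real (\<Sum>j<5. \<Sum>l<5. if (j + l) mod 5 = m then x j * y l else 0) * cis (2 * pi * real k * real m / 5)
      = (\<Sum>j<5. \<Sum>l<5. (if (j + l) mod 5 = m then complex_of_real (x j * y l) * cis (2 * pi * real k * real m / 5) else 0))" .
  qed
  also have "\<dots> = (\<Sum>j<5. \<Sum>m<5. \<Sum>l<5.
        (if (j + l) mod 5 = m then complex_of_real (x j * y l) * cis (2 * pi * real k * real m / 5) else 0))"
    by (rule sum.swap)
  also have "\<dots> = (\<Sum>j<5. \<Sum>l<5. \<Sum>m<5.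
        (if (j + l) mod 5 = m then complex_of_real (x j * y l) * cis (2 * pi * real k * real m / 5) else 0))"
    by (rule sum.cong[OF refl], rule sum.swap)
  also have "\<dots> = (\<Sum>j<5. \<Sum>l<5. complex_of_real (x j * y l) * cis (2 * pi * real k * real ((j + l) mod 5) / 5))"
    by (intro sum.cong refl) (subst sum.delta', simp_all)
  also have "\<dots> = (\<Sum>j<5. \<Sum>l<5. (complex_of_real (x j) * cis (2 * pi * real k * real j / 5)) *
         (complex_of_real (y l) * cis (2 * pi * real k * real l / 5)))"
    unfolding cis_mod5 of_real_mult by (simp only: mult_ac)
  also have "\<dots> = cc k x * cc k y"
    unfolding cc_def by (rule sum_product[symmetric])
  finally show ?thesis .
qed

lemma Re_cc: "Re (cc k x) = vk k x" and Im_cc: "Im (cc k x) = vtk k x"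
  unfolding cc_def vk_def vtk_def by simp_all

lemma vplus_cc: "vplus x = vk 0 x"
  unfolding vplus_def vk_def by simp

lemma rhok_cc: "rhok k x = cmod (cc k x)"
  unfolding rhok_def cmod_def Re_cc Im_cc ..

lemma vk_mult: "vk k (mult5 x y) = vk k x * vk k y - vtk k x * vtk k y"
  using cc_mult[of k x y] by (metis Re_cc Im_cc times_complex.sel(1))

lemma vtk_mult: "vtk k (mult5 x y) = vk k x * vtk k y + vtk k x * vk k y"
  using cc_mult[of k x y] by (metis Re_cc Im_cc times_complex.sel(2))

lemma rhok_mult: "rhok k (mult5 x y) = rhok k x * rhok k y"
  unfolding rhok_cc cc_mult norm_mult ..

lemma phik_prop:
  assumes "rhok k x > 0"
  shows "cos (phik k x) = vk k x / rhok k x \<and> sin (phik k x) = vtk k x / rhok k x"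
proof -
  have r2: "(rhok k x)\<^sup>2 = (vk k x)\<^sup>2 + (vtk k x)\<^sup>2"
    unfolding rhok_def by simp
  have "(vk k x / rhok k x)\<^sup>2 + (vtk k x / rhok k x)\<^sup>2 = ((vk k x)\<^sup>2 + (vtk k x)\<^sup>2) / (rhok k x)\<^sup>2"
    by (simp add: power_divide add_divide_distrib)
  also have "\<dots> = 1" unfolding r2[symmetric] using assms by simp
  finally have "(vk k x / rhok k x)\<^sup>2 + (vtk k x / rhok k x)\<^sup>2 = 1" .
  then obtain t where "0 \<le> t" "t < 2*pi" "vk k x / rhok k x = cos t" "vtk k x / rhok k x = sin t"
    by (rule sincos_total_2pi)
  then have "\<exists>t. 0 \<le> t \<and> t < 2 * pi \<and> cos t = vk k x / rhok k x \<and> sin t = vtk k x / rhok k x"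
    by auto
  then show ?thesis unfolding phik_def by (rule someI2_ex) auto
qed

lemma phik_mult:
  assumes "rhok k x > 0" "rhok k y > 0"
  shows "\<exists>m::int. phik k (mult5 x y) = phik k x + phik k y + 2 * pi * of_int m"
proof -
  have p: "rhok k (mult5 x y) > 0" using assms by (simp add: rhok_mult)
  note a = phik_prop[OF assms(1)] and b = phik_prop[OF assms(2)] and c = phik_prop[OF p]
  have "sin (phik k (mult5 x y)) = sin (phik k x + phik k y) \<and>
        cos (phik k (mult5 x y)) = cos (phik k x + phik k y)"
  proof -
    define r1 r2 where "r1 = rhok k x" and "r2 = rhok k y"
    have r1: "r1 > 0" and r2: "r2 > 0" using assms r1_def r2_def by auto
    have e1: "vk k x = r1 * cos (phik k x)" "vtk k x = r1 * sin (phik k x)"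
      using a r1 r1_def by auto
    have e2: "vk k y = r2 * cos (phik k y)" "vtk k y = r2 * sin (phik k y)"
      using b r2 r2_def by auto
    have e3: "vk k (mult5 x y) = (r1 * r2) * cos (phik k (mult5 x y))"
         "vtk k (mult5 x y) = (r1 * r2) * sin (phik k (mult5 x y))"
      using c p by (auto simp: rhok_mult r1_def r2_def)
    have "(r1 * r2) * cos (phik k (mult5 x y)) = (r1 * r2) * cos (phik k x + phik k y)"
      using e3(1) unfolding vk_mult e1 e2 cos_add by (simp add: algebra_simps)
    moreover have "(r1 * r2) * sin (phik k (mult5 x y)) = (r1 * r2) * sin (phik k x + phik k y)"
      using e3(2) unfolding vtk_mult e1 e2 sin_add by (simp add: algebra_simps)
    ultimately show ?thesis using r1 r2 by simp
  qed
  then show ?thesis by (simp add: sin_cos_eq_iff)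
qed

lemma tan_theta: "tan (thetaplus x) = sqrt 2 * rhok 1 x / vplus x"
  unfolding thetaplus_def by (simp add: tan_arctan add.commute[of pi])

lemma tan_psi: "tan (psi1 x) = rhok 1 x / rhok 2 x"
proof -
  have "rhok 2 x \<ge> 0" unfolding rhok_def by simp
  show ?thesis
  proof (cases "rhok 2 x > 0")
    case True then show ?thesis unfolding psi1_def by (simp add: tan_arctan)
  next
    case False then have "rhok 2 x = 0" using \<open>rhok 2 x \<ge> 0\<close> by simp
    then show ?thesis unfolding psi1_def by (simp add: tan_def)
  qed
qed

theorem mainTheorem2:
  fixes x' x'' :: "nat \<Rightarrow> real"
  defines "u \<equiv> mult5 x' x''"
  shows "vplus u = vplus x' * vplus x'' \<and>
    (\<forall>k\<in>{1,2}. rhok k u = rhok k x' * rhok k x'') \<and>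
    (\<forall>k\<in>{1,2}. rhok k x' > 0 \<longrightarrow> rhok k x'' > 0 \<longrightarrow>
           (\<exists>m::int. phik k u = phik k x' + phik k x'' + 2 * pi * of_int m)) \<and>
    (\<forall>k\<in>{1,2}. vk k u = vk k x' * vk k x'' - vtk k x' * vtk k x'') \<and>
    (\<forall>k\<in>{1,2}. vtk k u = vk k x' * vtk k x'' + vtk k x' * vk k x'') \<and>
    (tan (thetaplus u) = (1 / sqrt 2) * tan (thetaplus x') * tan (thetaplus x'')) \<and>
    (tan (psi1 u) = tan (psi1 x') * tan (psi1 x'')) \<and>
    (amp u = amp x' * amp x'')"
proof -
  have vp: "vplus u = vplus x' * vplus x''"
    unfolding u_def vplus_cc vk_mult by (simp add: vtk_def)
  have th: "tan (thetaplus u) = (1 / sqrt 2) * tan (thetaplus x') * tan (thetaplus x'')"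
    unfolding tan_theta vp unfolding u_def rhok_mult by simp
  have ps: "tan (psi1 u) = tan (psi1 x') * tan (psi1 x'')"
    unfolding tan_psi u_def rhok_mult by simp
  have am: "amp u = amp x' * amp x''"
    unfolding amp_def vp unfolding u_def rhok_mult
    by (simp add: real_root_mult[symmetric] power_mult_distrib mult_ac)
  show ?thesis using vp th ps am
    by (simp add: u_def rhok_mult vk_mult vtk_mult phik_mult)
qed

end
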